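(* In the two-period model with a secret bailout at price $p_g>p_0$ (i.e., $t=2$ buyers cannot observe which firms accepted the government offer), in equilibrium firms accept the government offer at $t=1$ if and only if $\theta<p_g+S$, and at $t=2$ firms sell assets to the market at price $p_0$ if and only if $\theta<\theta_0$.
   Context: Two-period model: a continuum of firms with privately known type $\theta\in[0,1]$, cdf $F$, density $f>0$, $f$ strictly log-concave, and for every $b\in(0,1]$ the map $a\mapsto 2\mathbb{E}[\theta\mid a<\theta<b]-\mathbb{E}[\theta\mid\theta\le a]$ is increasing on $(0,b)$. A type-$\theta$ firm holds one unit of an asset worth $\theta$ in each of two periods $t=1,2$. In each period it has a project with cost $I>0$ and net return $S>0$ that can be funded only by selling that period's unit; selling that unit at price $p\ge I$ yields $p+S$ for that period, not selling yields $\theta$. A firm's total payoff is the sum of the two periods' payoffs (period-2 payoff weighted by $\delta<1$, and equilibria are considered in the limit $\delta\to1$). In each period competitive short-lived risk-neutral buyers make price offers (Bertrand; break even in expectation; indifferent buyers buy). At $t=1$ only, the government offers to buy one unit at price $p_g$; each firm then sells its $t=1$ unit to the government, to the market, or not at all. Sales to the market at $t=1$ are not observed by $t=2$ buyers. Equilibrium means perfect Bayesian equilibrium. Laissez-faire: $\theta_0\in(0,1)$ uniquely solves $\theta_0-S=\mathbb{E}[\theta\mid\theta\le\theta_0]$, $p_0:=\mathbb{E}[\theta\mid\theta\le\theta_0]$, and $p_0\ge I$. Secret bailout: the acceptance of the government offer is also unobserved by $t=2$ buyers. *)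

theory Defs
  imports "HOL-Analysis.Analysis"
begin

definition condE :: "(real \<Rightarrow> real) \<Rightarrow> real set \<Rightarrow> real" where
  "condE f A = integral A (\<lambda>t. t * f t) / integral A f"

definition strictly_log_concave_on :: "real set \<Rightarrow> (real \<Rightarrow> real) \<Rightarrow> bool" where
  "strictly_log_concave_on A f \<longleftrightarrow> (\<forall>x\<in>A. 0 < f x) \<and>
     (\<forall>x\<in>A. \<forall>y\<in>A. \<forall>u. x \<noteq> y \<and> 0 < u \<and> u < 1 \<longrightarrow>
        u * ln (f x) + (1 - u) * ln (f y) < ln (f (u * x + (1 - u) * y)))"

text \<open>Payoff, in one period, from selling that period's unit at price p:
  the project (cost I, net return S) is funded iff p \<ge> I.\<close>
definition sale_pay :: "real \<Rightarrow> real \<Rightarrow> real \<Rightarrow> real" where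
  "sale_pay I S p = (if I \<le> p then p + S else p)"

definition profit :: "(real \<Rightarrow> real) \<Rightarrow> real set \<Rightarrow> real \<Rightarrow> real" where
  "profit f A p = integral A (\<lambda>t. (t - p) * f t)"

definition mass :: "(real \<Rightarrow> real) \<Rightarrow> real set \<Rightarrow> real" where
  "mass f A = integral A f"

text \<open>Sell q is the set of
  types selling to the market if the (best) market offer is q; p is the equilibrium price.\<close>
definition bertrand :: "(real \<Rightarrow> real) \<Rightarrow> (real \<Rightarrow> real set) \<Rightarrow> real \<Rightarrow> bool" where
  "bertrand f Sell p \<longleftrightarrow> profit f (Sell p) p = 0 \<and>
     (\<forall>q>p. profit f (Sell q) q < 0 \<or> mass f (Sell q) = 0)"

datatype choice = Gov | Mkt | Keep

text \<open>Secret-bailout equilibrium (PBE).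
  c1 q \<theta>   : t=1 choice of type \<theta> when the t=1 market offer is q;
  s2 c q p \<theta>: whether type \<theta>, having made t=1 choice c, after t=1 market offer q, sells
               its t=2 unit when the t=2 market offer is p;
  p1        : t=1 market price;  p2 q : t=2 market price after t=1 market offer q.
  Since the government acceptance and t=1 market sales are unobserved, the t=2 buyers
  hold the prior belief; their price may only depend on the (public) t=1 market offer.\<close>
definition secret_eq ::
  "real \<Rightarrow> real \<Rightarrow> real \<Rightarrow> real \<Rightarrow> (real \<Rightarrow> real) \<Rightarrow>
   (real \<Rightarrow> real \<Rightarrow> choice) \<Rightarrow> (choice \<Rightarrow> real \<Rightarrow> real \<Rightarrow> real \<Rightarrow> bool) \<Rightarrow>
   real \<Rightarrow> (real \<Rightarrow> real) \<Rightarrow> bool" where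
  "secret_eq I S pg \<delta> f c1 s2 p1 p2 \<longleftrightarrow>
    \<comment> \<open>t=2: sequential rationality of firms after every history and every offer\<close>
    (\<forall>c q p \<theta>. \<theta> \<in> {0..1} \<longrightarrow>
        (s2 c q p \<theta> \<longrightarrow> \<theta> \<le> sale_pay I S p) \<and> (\<not> s2 c q p \<theta> \<longrightarrow> sale_pay I S p \<le> \<theta>)) \<and>
    \<comment> \<open>t=2: Bertrand pricing after every t=1 market offer\<close>
    (\<forall>q. bertrand f (\<lambda>p. {\<theta>\<in>{0..1}. s2 (c1 q \<theta>) q p \<theta>}) (p2 q)) \<and>
    \<comment> \<open>t=1: optimality of firms (total payoff, t=2 weighted by \<delta>) after every offer q,
        where a firm indifferent between the government and the market sells to the government\<close>
    (let pay1 = (\<lambda>c q \<theta>. case c of Gov \<Rightarrow> sale_pay I S pg | Mkt \<Rightarrow> sale_pay I S q | Keep \<Rightarrow> \<theta>);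
         cont = (\<lambda>c q \<theta>. if s2 c q (p2 q) \<theta> then sale_pay I S (p2 q) else \<theta>);
         U = (\<lambda>c q \<theta>. pay1 c q \<theta> + \<delta> * cont c q \<theta>)
     in (\<forall>q \<theta>. \<theta> \<in> {0..1} \<longrightarrow>
           (\<forall>c. U c q \<theta> \<le> U (c1 q \<theta>) q \<theta>) \<and>
           (U (c1 q \<theta>) q \<theta> \<le> U Gov q \<theta> \<longrightarrow> c1 q \<theta> = Gov))) \<and>
    \<comment> \<open>t=1: Bertrand pricing of the market given the government offer\<close>
    bertrand f (\<lambda>q. {\<theta>\<in>{0..1}. c1 q \<theta> = Mkt}) p1"

end

theory Submission imports Defs begin

locale mdl =
  fixes f :: "real \<Rightarrow> real" and S th0 :: real
  assumes fi: "f integrable_on {0..1}" and fone: "integral {0..1} f = 1"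
    and fpos: "\<forall>t\<in>{0..1}. 0 < f t"
    and lc: "strictly_log_concave_on {0..1} f"
    and Spos: "0 < S"
    and th0: "th0 \<in> {0<..<1}" "th0 - S = condE f {0..th0}"
    and th0u: "\<forall>x\<in>{0<..<1}. x - S = condE f {0..x} \<longrightarrow> x = th0"
begin

definition "F x = integral {0..x} f"
definition "Tm x = integral {0..x} (\<lambda>t. t * f t)"
definition "N x = integral {0..x} (\<lambda>t. (x - t) * f t)"

lemma lcI: assumes "x \<in> {0..1}" "y \<in> {0..1}" "x \<noteq> y" "0 < u" "u < 1"
  shows "u * ln (f x) + (1 - u) * ln (f y) < ln (f (u * x + (1 - u) * y))"
  using lc assms unfolding strictly_log_concave_on_def by blast

lemma flow: "\<exists>c>0. \<forall>t\<in>{0..1}. c \<le> f t"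
proof (intro exI[of _ "min (f 0) (f 1)"] conjI ballI)
  show "0 < min (f 0) (f 1)" using fpos by auto
  fix t :: real assume t: "t \<in> {0..1}"
  show "min (f 0) (f 1) \<le> f t"
  proof (cases "t = 0 \<or> t = 1")
    case True then show ?thesis by auto
  next
    case False
    with t have t': "0 < t" "t < 1" by auto
    have "t * ln (f 1) + (1 - t) * ln (f 0) < ln (f (t * 1 + (1 - t) * 0))"
      by (rule lcI) (use t' in auto)
    moreover have "ln (min (f 0) (f 1)) \<le> t * ln (f 1) + (1 - t) * ln (f 0)"
    proof -
      have "ln (min (f 0) (f 1)) \<le> ln (f 1)" "ln (min (f 0) (f 1)) \<le> ln (f 0)"
        using fpos by auto
      hence "t * ln (min (f 0) (f 1)) + (1-t) * ln (min (f 0) (f 1)) \<le> t * ln (f 1) + (1 - t) * ln (f 0)"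
        using t' by (intro add_mono mult_left_mono) auto
      thus ?thesis by (simp add: algebra_simps)
    qed
    ultimately have "ln (min (f 0) (f 1)) < ln (f t)" by simp
    thus ?thesis using fpos t by (simp add: ln_less_cancel_iff)
  qed
qed

lemma ratio:
  assumes "0 \<le> a" "a \<le> b" "a \<le> c" "b + c = a + d" "d \<le> 1"
  shows "f a * f d \<le> f b * f c"
proof -
  have bd: "b \<le> d" "c \<le> d" using assms by auto
  show ?thesis
  proof (cases "b = a \<or> b = d")
    case True
    then show ?thesis using assms by (auto simp: mult.commute)
  next
    case False
    define l where "l = (d - b) / (d - a)"
    have da: "a < d" using False assms bd by auto
    have l01: "0 < l" "l < 1" using False bd assms da unfolding l_def by (auto simp: field_simps)
    have ld: "l * (d - a) = d - b" using da unfolding l_def by simp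
    have bl: "b = l * a + (1 - l) * d" using ld by (simp add: algebra_simps)
    have cl: "c = (1 - l) * a + (1 - (1 - l)) * d" using ld assms(4) by (simp add: algebra_simps)
    have A: "a \<in> {0..1}" "d \<in> {0..1}" using assms bd by auto
    have 1: "l * ln (f a) + (1 - l) * ln (f d) < ln (f b)"
      using lcI[OF A _ l01] da bl by simp
    have 2: "(1 - l) * ln (f a) + (1 - (1 - l)) * ln (f d) < ln (f c)"
      using lcI[OF A, of "1 - l"] da cl l01 by simp
    have pos: "0<f a" "0<f b" "0<f c" "0<f d" using fpos A assms bd by auto
    have "ln (f a) + ln (f d) < ln (f b) + ln (f c)"
      using 1 2 by (simp add: algebra_simps)
    then have "ln (f a * f d) < ln (f b * f c)" using pos by (simp add: ln_mult)
    then show ?thesis using pos by simp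
  qed
qed

lemma int_mult:
  assumes "0 \<le> a" "b \<le> 1" "continuous_on {a..b} g"
  shows "(\<lambda>t. g t * f t) integrable_on {a..b}"
proof -
  have "f integrable_on {a..b}" by (rule integrable_subinterval_real[OF fi]) (use assms in auto)
  moreover have "\<And>x. x \<in> {a..b} \<Longrightarrow> 0 \<le> f x"
  proof -
    fix x assume "x \<in> {a..b}" hence "x \<in> {0..1}" using assms by auto
    thus "0 \<le> f x" using fpos by (simp add: less_imp_le)
  qed
  ultimately have "f absolutely_integrable_on {a..b}"
    by (rule nonnegative_absolutely_integrable_1)
  have "(\<lambda>t. g t * f t) absolutely_integrable_on {a..b}"
    by (rule absolutely_integrable_bounded_measurable_product_real)
      (auto intro: continuous_imp_measurable_on_sets_lebesgue compact_imp_bounded compact_continuous_image assms \<open>f absolutely_integrable_on {a..b}\<close>)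
  then show ?thesis using set_lebesgue_integral_eq_integral(1) by blast
qed

lemma Fpos: assumes "0 < x" "x \<le> 1" shows "0 < F x"
proof -
  obtain c where c: "c > 0" "\<forall>t\<in>{0..1}. c \<le> f t" using flow by blast
  have "integral {0..x} (\<lambda>_. c) \<le> integral {0..x} f"
    by (rule integral_le) (use c assms in \<open>auto intro: integrable_subinterval_real[OF fi]\<close>)
  moreover have "integral {0..x} (\<lambda>_. c) = x * c" using assms by simp
  ultimately show ?thesis using c assms unfolding F_def by (smt (verit) mult_pos_pos)
qed

lemma Nform: assumes "0 \<le> x" "x \<le> 1" shows "N x = x * F x - Tm x"
proof -
  have i1: "(\<lambda>t. x * f t) integrable_on {0..x}" using int_mult[of 0 x "\<lambda>t. x"] assms by auto
  have i2: "(\<lambda>t. t * f t) integrable_on {0..x}" using int_mult[of 0 x "\<lambda>t. t"] assms by (auto intro: continuous_intros)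
  have "N x = integral {0..x} (\<lambda>t. x * f t - t * f t)" unfolding N_def by (simp add: algebra_simps)
  also have "\<dots> = integral {0..x} (\<lambda>t. x * f t) - Tm x" unfolding Tm_def using i1 i2 by (rule integral_diff)
  finally show ?thesis unfolding F_def by simp
qed

lemma Dform: assumes "0 < x" "x \<le> 1" shows "x - condE f {0..x} = N x / F x"
  using Nform[of x] Fpos[OF assms] assms unfolding condE_def F_def[symmetric] Tm_def[symmetric]
  by (simp add: field_simps)

lemma lin: assumes "0 \<le> z" "z \<le> 1"
  shows "integral {0..z} (\<lambda>t. (z - t - c) * f t) = N z - c * F z"
proof -
  have i1: "(\<lambda>t. (z - t) * f t) integrable_on {0..z}" using int_mult[OF _ _ continuous_on_diff[OF continuous_on_const continuous_on_id], of 0 z z] assms by auto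
  have i2: "(\<lambda>t. c * f t) integrable_on {0..z}" using int_mult[of 0 z "\<lambda>t. c"] assms by auto
  have "integral {0..z} (\<lambda>t. (z - t - c) * f t) = integral {0..z} (\<lambda>t. (z - t) * f t - c * f t)"
    by (simp add: algebra_simps)
  also have "\<dots> = N z - integral {0..z} (\<lambda>t. c * f t)" unfolding N_def using i1 i2 by (rule integral_diff)
  finally show ?thesis unfolding F_def by simp
qed

lemma Dmono: assumes "0 < x" "x \<le> y" "y \<le> 1" shows "N x / F x \<le> N y / F y"
proof -
  define c where "c = N x / F x"
  define h where "h = y - x"
  have Fx: "0 < F x" using Fpos assms by auto
  have Fy: "0 < F y" using Fpos assms by auto
  have fnn: "\<And>t. t \<in> {0..1} \<Longrightarrow> 0 \<le> f t" using fpos by (simp add: less_imp_le)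
  have fp: "\<And>t. 0 \<le> t \<Longrightarrow> t \<le> 1 \<Longrightarrow> 0 < f t" using fpos by simp
  have Nx0: "0 \<le> N x" unfolding N_def
    by (rule integral_nonneg) (use int_mult[OF _ _ continuous_on_diff[OF continuous_on_const continuous_on_id], of 0 x x] assms fnn in auto)
  have Tx0: "0 \<le> Tm x" unfolding Tm_def
    by (rule integral_nonneg) (use int_mult[of 0 x "\<lambda>t. t"] assms fnn in \<open>auto intro: continuous_intros\<close>)
  have c0: "0 \<le> c" "c \<le> x" using Nx0 Tx0 Fx Nform[of x] assms unfolding c_def by (auto simp: field_simps)
  define G where "G t = (y - t - c) * f t" for t
  have "continuous_on {0..y} (\<lambda>t. y - t - c)" by (intro continuous_intros)
  then have Gint: "G integrable_on {0..y}" unfolding G_def using int_mult[of 0 y "\<lambda>t. y - t - c"] assms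
    by auto
  have key: "integral {0..y} G = N y - c * F y" unfolding G_def using lin[of y c] assms by auto
  have split: "integral {0..h} G + integral {h..y} G = integral {0..y} G"
    by (rule Henstock_Kurzweil_Integration.integral_combine) (use assms Gint h_def in auto)
  have p1: "0 \<le> integral {0..h} G"
  proof (rule integral_nonneg)
    show "G integrable_on {0..h}" by (rule integrable_subinterval_real[OF Gint]) (use assms h_def in auto)
    fix t assume t: "t \<in> {0..h}"
    then have "0 \<le> y - t - c" using c0 h_def by auto
    moreover have "0 \<le> f t" using t assms h_def fnn by auto
    ultimately show "0 \<le> G t" unfolding G_def by simp
  qed
  have "(G has_integral integral {h..y} G) (cbox h y)"
    using integrable_subinterval_real[OF Gint, of h y] assms h_def by (auto simp: integrable_integral)
  from has_integral_affinity[OF this, of 1 h]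
  have "((\<lambda>s. G (s + h)) has_integral integral {h..y} G) ((\<lambda>s. s + - h) ` {h..y})" by simp
  moreover have "(\<lambda>s. s + - h) ` {h..y} = {0..x}" using image_add_atLeastAtMost'[of "-h" h y] h_def by simp
  ultimately have sh: "((\<lambda>s. G (s + h)) has_integral integral {h..y} G) {0..x}" by metis
  define s0 where "s0 = x - c"
  define k where "k = f (s0 + h) / f s0"
  have s0: "0 \<le> s0" "s0 \<le> x" "s0 + h \<le> 1" using c0 assms h_def s0_def by auto
  have pw: "k * ((x - s - c) * f s) \<le> G (s + h)" if s: "s \<in> {0..x}" for s
  proof -
    have Gs: "G (s + h) = (x - s - c) * f (s + h)" unfolding G_def h_def by (simp add: algebra_simps)
    have pos: "0 < f s0" "0 < f (s0 + h)" "0 < f s" "0 < f (s + h)" using fp s0 s assms h_def by auto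
    show ?thesis
    proof (cases "s \<le> s0")
      case True
      have "f s * f (s0 + h) \<le> f (s + h) * f s0"
        by (rule ratio) (use True s s0 assms h_def in auto)
      hence "k * f s \<le> f (s + h)" unfolding k_def using pos by (simp add: field_simps)
      moreover have "0 \<le> x - s - c" using True s0_def by auto
      ultimately have "(x - s - c) * (k * f s) \<le> (x - s - c) * f (s + h)" by (rule mult_left_mono)
      thus ?thesis using Gs by (simp add: algebra_simps)
    next
      case False
      have "f s0 * f (s + h) \<le> f (s0 + h) * f s"
        by (rule ratio) (use False s s0 assms h_def in auto)
      hence "f (s + h) \<le> k * f s" unfolding k_def using pos by (simp add: field_simps)
      moreover have "x - s - c \<le> 0" using False s0_def by auto
      ultimately have "(x - s - c) * (k * f s) \<le> (x - s - c) * f (s + h)" by (rule mult_left_mono_neg)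
      thus ?thesis using Gs by (simp add: algebra_simps)
    qed
  qed
  have "continuous_on {0..x} (\<lambda>s. x - s - c)" by (intro continuous_intros)
  then have "(\<lambda>s. (x - s - c) * f s) integrable_on {0..x}" using int_mult[of 0 x "\<lambda>s. x - s - c"] assms by auto
  then have "(\<lambda>s. k * ((x - s - c) * f s)) integrable_on {0..x}" using integrable_on_cmult_left[of "\<lambda>s. (x - s - c) * f s" "{0..x}" k] by simp
  then have "integral {0..x} (\<lambda>s. k * ((x - s - c) * f s)) \<le> integral {0..x} (\<lambda>s. G (s + h))"
    by (rule integral_le) (use sh pw in auto)
  moreover have "N x - c * F x = 0" unfolding c_def using Fx by simp
  moreover have "integral {0..x} (\<lambda>s. k * ((x - s - c) * f s)) = k * (N x - c * F x)"
    using lin[of x c] assms by simp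
  ultimately have "0 \<le> integral {0..x} (\<lambda>s. G (s + h))" by (metis mult_zero_right)
  moreover have "integral {0..x} (\<lambda>s. G (s + h)) = integral {h..y} G" using sh by blast
  ultimately have "0 \<le> integral {0..y} G" using split p1 by linarith
  hence "c * F y \<le> N y" using key by simp
  thus ?thesis using Fy unfolding c_def[symmetric] by (simp add: field_simps)
qed

lemma setint: fixes g :: "real \<Rightarrow> real" assumes "0 \<le> a" "{t\<in>{0..1}. t < a} \<subseteq> A" "A \<subseteq> {t\<in>{0..1}. t \<le> a}"
  shows "integral A g = integral {0..min a 1} g"
proof (rule integral_spike_set)
  show "negligible {x \<in> A - {0..min a 1}. g x \<noteq> 0}"
    by (rule negligible_subset[of "{}"]) (use assms in auto)
  show "negligible {x \<in> {0..min a 1} - A. g x \<noteq> 0}"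
    by (rule negligible_subset[OF negligible_sing[of a]]) (use assms in force)
qed

lemma lin2: assumes "0 \<le> z" "z \<le> 1"
  shows "integral {0..z} (\<lambda>t. (t - P) * f t) = Tm z - P * F z"
proof -
  have i1: "(\<lambda>t. t * f t) integrable_on {0..z}" using int_mult[OF _ _ continuous_on_id, of 0 z] assms by auto
  have i2: "(\<lambda>t. P * f t) integrable_on {0..z}" using int_mult[of 0 z "\<lambda>t. P"] assms by auto
  have "integral {0..z} (\<lambda>t. (t - P) * f t) = integral {0..z} (\<lambda>t. t * f t - P * f t)"
    by (simp add: algebra_simps)
  also have "\<dots> = Tm z - integral {0..z} (\<lambda>t. P * f t)" unfolding Tm_def using i1 i2 by (rule integral_diff)
  finally show ?thesis unfolding F_def by simp
qed

lemma noM: assumes "th0 < a" "{t\<in>{0..1}. t < a} \<subseteq> A" "A \<subseteq> {t\<in>{0..1}. t \<le> a}"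
    "profit f A (a - S) = 0"
  shows False
proof -
  have a0: "0 \<le> a" using assms th0 by auto
  have pr: "Tm (min a 1) - (a - S) * F (min a 1) = 0"
    using assms(4) setint[OF a0 assms(2,3), of "\<lambda>t. (t - (a - S)) * f t"] lin2[of "min a 1" "a - S"] a0 unfolding profit_def by simp
  show False
  proof (cases "a < 1")
    case True
    have "condE f {0..a} = a - S" using pr True Fpos[of a] th0 assms(1)
      unfolding condE_def Tm_def[symmetric] F_def[symmetric] by (auto simp: field_simps)
    hence "a = th0" using th0u True th0 assms(1) by auto
    thus False using assms(1) by simp
  next
    case False
    have F1: "F 1 = 1" using fone unfolding F_def by simp
    have "Tm 1 = a - S" using pr False F1 by simp
    hence D1: "N 1 / F 1 \<le> S" using Nform[of 1] F1 False by simp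
    have Dt: "N th0 / F th0 = S" using Dform[of th0] th0 by simp
    define z where "z = (th0 + 1) / 2"
    have z: "th0 < z" "z < 1" using th0 unfolding z_def by auto
    have "N th0 / F th0 \<le> N z / F z" by (rule Dmono) (use z th0 in auto)
    moreover have "N z / F z \<le> N 1 / F 1" by (rule Dmono) (use z th0 in auto)
    ultimately have "N z / F z = S" using D1 Dt by simp
    hence "z - S = condE f {0..z}" using Dform[of z] z th0 by simp
    hence "z = th0" using th0u z th0 by auto
    thus False using z by simp
  qed
qed

lemma dev: assumes "{t\<in>{0..1}. t < th0} \<subseteq> A" "A \<subseteq> {t\<in>{0..1}. t \<le> th0}"
  shows "profit f A (th0 - S) = 0" "mass f A > 0"
proof -
  have a0: "0 \<le> th0" "th0 \<le> 1" using th0 by auto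
  have m: "min th0 1 = th0" using th0 by simp
  have Fp: "0 < F th0" using Fpos th0 by auto
  have "profit f A (th0 - S) = Tm th0 - (th0 - S) * F th0"
    using setint[OF a0(1) assms, of "\<lambda>t. (t - (th0 - S)) * f t"] lin2[of th0 "th0 - S"] a0 m unfolding profit_def by simp
  also have "\<dots> = 0" using th0(2) Fp unfolding condE_def Tm_def[symmetric] F_def[symmetric] by (simp add: field_simps)
  finally show "profit f A (th0 - S) = 0" .
  show "mass f A > 0" using setint[OF a0(1) assms, of f] m Fp unfolding mass_def F_def by simp
qed

end

theorem theorem2:
  fixes f :: "real \<Rightarrow> real" and I S pg \<delta> \<theta>0 p0 p1 :: real
    and c1 :: "real \<Rightarrow> real \<Rightarrow> choice"
    and s2 :: "choice \<Rightarrow> real \<Rightarrow> real \<Rightarrow> real \<Rightarrow> bool"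
    and p2 :: "real \<Rightarrow> real"
  assumes dens_int: "f integrable_on {0..1}" and dens_one: "integral {0..1} f = 1"
    and dens_pos: "\<forall>t\<in>{0..1}. 0 < f t"
    and logconc: "strictly_log_concave_on {0..1} f"
    and cond_mono: "\<forall>b\<in>{0<..1}. mono_on {0<..<b}
                       (\<lambda>a. 2 * condE f {a<..<b} - condE f {0..a})"
    and I_pos: "0 < I" and S_pos: "0 < S"
    and theta0: "\<theta>0 \<in> {0<..<1}" "\<theta>0 - S = condE f {0..\<theta>0}"
    and theta0_unique: "\<forall>x\<in>{0<..<1}. x - S = condE f {0..x} \<longrightarrow> x = \<theta>0"
    and p0_def: "p0 = condE f {0..\<theta>0}" and p0_I: "I \<le> p0"
    and delta: "0 < \<delta>" "\<delta> < 1"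
    and pg: "p0 < pg"
    and eq: "secret_eq I S pg \<delta> f c1 s2 p1 p2"
  shows "(\<forall>\<theta>\<in>{0..1}. \<theta> \<noteq> pg + S \<longrightarrow> (c1 p1 \<theta> = Gov \<longleftrightarrow> \<theta> < pg + S)) \<and>
         p2 p1 = p0 \<and>
         (\<forall>\<theta>\<in>{0..1}. \<theta> \<noteq> \<theta>0 \<longrightarrow> (s2 (c1 p1 \<theta>) p1 p0 \<theta> \<longleftrightarrow> \<theta> < \<theta>0))"
proof -
  interpret mdl f S \<theta>0
    by (rule mdl.intro[OF dens_int dens_one dens_pos logconc S_pos theta0(1) theta0(2) theta0_unique])
  have p0e: "p0 = \<theta>0 - S" using p0_def theta0(2) by simp
  have spf: "\<And>p. I \<le> p \<Longrightarrow> sale_pay I S p = p + S" unfolding sale_pay_def by simp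
  have spl: "\<And>p. sale_pay I S p \<le> p + S" unfolding sale_pay_def using S_pos by simp
  have spg: "sale_pay I S pg = pg + S" using spf pg p0_I by simp
  have sp0: "sale_pay I S p0 = \<theta>0" using spf p0_I p0e by simp
  have E: "(\<forall>c q p \<theta>. \<theta> \<in> {0..1} \<longrightarrow>
        (s2 c q p \<theta> \<longrightarrow> \<theta> \<le> sale_pay I S p) \<and> (\<not> s2 c q p \<theta> \<longrightarrow> sale_pay I S p \<le> \<theta>)) \<and>
    (\<forall>q. bertrand f (\<lambda>p. {\<theta>\<in>{0..1}. s2 (c1 q \<theta>) q p \<theta>}) (p2 q)) \<and>
    (let pay1 = (\<lambda>c q \<theta>. case c of Gov \<Rightarrow> sale_pay I S pg | Mkt \<Rightarrow> sale_pay I S q | Keep \<Rightarrow> \<theta>);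
         cont = (\<lambda>c q \<theta>. if s2 c q (p2 q) \<theta> then sale_pay I S (p2 q) else \<theta>);
         U = (\<lambda>c q \<theta>. pay1 c q \<theta> + \<delta> * cont c q \<theta>)
     in (\<forall>q \<theta>. \<theta> \<in> {0..1} \<longrightarrow>
           (\<forall>c. U c q \<theta> \<le> U (c1 q \<theta>) q \<theta>) \<and>
           (U (c1 q \<theta>) q \<theta> \<le> U Gov q \<theta> \<longrightarrow> c1 q \<theta> = Gov))) \<and>
    bertrand f (\<lambda>q. {\<theta>\<in>{0..1}. c1 q \<theta> = Mkt}) p1"
    using eq unfolding secret_eq_def .
  then have E3: "(let pay1 = (\<lambda>c q \<theta>. case c of Gov \<Rightarrow> sale_pay I S pg | Mkt \<Rightarrow> sale_pay I S q | Keep \<Rightarrow> \<theta>);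
         cont = (\<lambda>c q \<theta>. if s2 c q (p2 q) \<theta> then sale_pay I S (p2 q) else \<theta>);
         U = (\<lambda>c q \<theta>. pay1 c q \<theta> + \<delta> * cont c q \<theta>)
     in (\<forall>q \<theta>. \<theta> \<in> {0..1} \<longrightarrow>
           (\<forall>c. U c q \<theta> \<le> U (c1 q \<theta>) q \<theta>) \<and>
           (U (c1 q \<theta>) q \<theta> \<le> U Gov q \<theta> \<longrightarrow> c1 q \<theta> = Gov)))" by (rule conjunct1[OF conjunct2[OF conjunct2]])
  from E have E1: "\<And>c q p \<theta>. \<theta> \<in> {0..1} \<Longrightarrow>
        (s2 c q p \<theta> \<longrightarrow> \<theta> \<le> sale_pay I S p) \<and> (\<not> s2 c q p \<theta> \<longrightarrow> sale_pay I S p \<le> \<theta>)"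
    and E2: "\<And>q. bertrand f (\<lambda>p. {\<theta>\<in>{0..1}. s2 (c1 q \<theta>) q p \<theta>}) (p2 q)"
    and E4: "bertrand f (\<lambda>q. {\<theta>\<in>{0..1}. c1 q \<theta> = Mkt}) p1"
    apply -
    subgoal by (rule E[THEN conjunct1, rule_format])
    subgoal by (rule E[THEN conjunct2, THEN conjunct1, rule_format])
    subgoal by (rule E[THEN conjunct2, THEN conjunct2, THEN conjunct2])
    done
  have CONT: "\<And>c q \<theta>. \<theta> \<in> {0..1} \<Longrightarrow> (if s2 c q (p2 q) \<theta> then sale_pay I S (p2 q) else \<theta>) = max \<theta> (sale_pay I S (p2 q))"
  proof -
    fix c q \<theta> assume t: "(\<theta>::real) \<in> {0..1}"
    show "(if s2 c q (p2 q) \<theta> then sale_pay I S (p2 q) else \<theta>) = max \<theta> (sale_pay I S (p2 q))"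
      using E1[OF t, of c q "p2 q"] by auto
  qed
  define pay where "pay c q \<theta> = (case c of Gov \<Rightarrow> sale_pay I S pg | Mkt \<Rightarrow> sale_pay I S q | Keep \<Rightarrow> \<theta>)" for c q \<theta>
  have OPT: "\<And>q \<theta>. \<theta> \<in> {0..1} \<Longrightarrow> (\<forall>c. pay c q \<theta> \<le> pay (c1 q \<theta>) q \<theta>) \<and> (pay (c1 q \<theta>) q \<theta> \<le> pay Gov q \<theta> \<longrightarrow> c1 q \<theta> = Gov)"
  proof -
    fix q \<theta> assume t: "(\<theta>::real) \<in> {0..1}"
    have E3b: "(\<forall>c. pay c q \<theta> + \<delta> * (if s2 c q (p2 q) \<theta> then sale_pay I S (p2 q) else \<theta>) \<le> pay (c1 q \<theta>) q \<theta> + \<delta> * (if s2 (c1 q \<theta>) q (p2 q) \<theta> then sale_pay I S (p2 q) else \<theta>)) \<and>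
           (pay (c1 q \<theta>) q \<theta> + \<delta> * (if s2 (c1 q \<theta>) q (p2 q) \<theta> then sale_pay I S (p2 q) else \<theta>) \<le> pay Gov q \<theta> + \<delta> * (if s2 Gov q (p2 q) \<theta> then sale_pay I S (p2 q) else \<theta>) \<longrightarrow> c1 q \<theta> = Gov)"
      unfolding pay_def using E3[unfolded Let_def, rule_format, OF t] .
    have "(\<forall>c. pay c q \<theta> + \<delta> * max \<theta> (sale_pay I S (p2 q)) \<le> pay (c1 q \<theta>) q \<theta> + \<delta> * max \<theta> (sale_pay I S (p2 q))) \<and>
           (pay (c1 q \<theta>) q \<theta> + \<delta> * max \<theta> (sale_pay I S (p2 q)) \<le> pay Gov q \<theta> + \<delta> * max \<theta> (sale_pay I S (p2 q)) \<longrightarrow> c1 q \<theta> = Gov)"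
      using E3b unfolding CONT[OF t] .
    then show "(\<forall>c. pay c q \<theta> \<le> pay (c1 q \<theta>) q \<theta>) \<and> (pay (c1 q \<theta>) q \<theta> \<le> pay Gov q \<theta> \<longrightarrow> c1 q \<theta> = Gov)"
      by simp
  qed
  have Sbounds: "\<And>q p. {t\<in>{0..1}. t < sale_pay I S p} \<subseteq> {\<theta>\<in>{0..1}. s2 (c1 q \<theta>) q p \<theta>} \<and>
       {\<theta>\<in>{0..1}. s2 (c1 q \<theta>) q p \<theta>} \<subseteq> {t\<in>{0..1}. t \<le> sale_pay I S p}"
  proof -
    fix q p
    show "{t\<in>{0..1}. t < sale_pay I S p} \<subseteq> {\<theta>\<in>{0..1}. s2 (c1 q \<theta>) q p \<theta>} \<and>
       {\<theta>\<in>{0..1}. s2 (c1 q \<theta>) q p \<theta>} \<subseteq> {t\<in>{0..1}. t \<le> sale_pay I S p}"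
    proof (intro conjI subsetI)
      fix t assume t: "t \<in> {t\<in>{0..1}. t < sale_pay I S p}"
      then have t1: "t \<in> {0..1}" by simp
      show "t \<in> {\<theta>\<in>{0..1}. s2 (c1 q \<theta>) q p \<theta>}" using E1[OF t1, of "c1 q t" q p] t by auto
    next
      fix t assume t: "t \<in> {\<theta>\<in>{0..1}. s2 (c1 q \<theta>) q p \<theta>}"
      then have t1: "t \<in> {0..1}" by simp
      show "t \<in> {t\<in>{0..1}. t \<le> sale_pay I S p}" using E1[OF t1, of "c1 q t" q p] t by auto
    qed
  qed
  have P2: "p2 q = p0" for q
  proof -
    have B: "profit f {\<theta>\<in>{0..1}. s2 (c1 q \<theta>) q (p2 q) \<theta>} (p2 q) = 0"
       "\<And>q'. q' > p2 q \<Longrightarrow> profit f {\<theta>\<in>{0..1}. s2 (c1 q \<theta>) q q' \<theta>} q' < 0 \<or> mass f {\<theta>\<in>{0..1}. s2 (c1 q \<theta>) q q' \<theta>} = 0"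
      using E2[of q] unfolding bertrand_def by blast+
    have ge: "p0 \<le> p2 q"
    proof (rule ccontr)
      assume "\<not> p0 \<le> p2 q"
      hence "p0 > p2 q" by simp
      have sb: "{t\<in>{0..1}. t < \<theta>0} \<subseteq> {\<theta>\<in>{0..1}. s2 (c1 q \<theta>) q p0 \<theta>}"
               "{\<theta>\<in>{0..1}. s2 (c1 q \<theta>) q p0 \<theta>} \<subseteq> {t\<in>{0..1}. t \<le> \<theta>0}"
        using Sbounds[where q=q and p=p0] unfolding sp0 by blast+
      have d: "profit f {\<theta>\<in>{0..1}. s2 (c1 q \<theta>) q p0 \<theta>} p0 = 0"
              "mass f {\<theta>\<in>{0..1}. s2 (c1 q \<theta>) q p0 \<theta>} > 0"
        using dev[OF sb] unfolding p0e[symmetric] by blast+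
      from B(2)[OF \<open>p0 > p2 q\<close>] d show False by linarith
    qed
    show ?thesis
    proof (rule ccontr)
      assume "p2 q \<noteq> p0"
      with ge have gt: "p0 < p2 q" by simp
      have sp: "sale_pay I S (p2 q) = p2 q + S" using spf gt p0_I by simp
      have sb: "{t\<in>{0..1}. t < p2 q + S} \<subseteq> {\<theta>\<in>{0..1}. s2 (c1 q \<theta>) q (p2 q) \<theta>}"
               "{\<theta>\<in>{0..1}. s2 (c1 q \<theta>) q (p2 q) \<theta>} \<subseteq> {t\<in>{0..1}. t \<le> p2 q + S}"
        using Sbounds[where q=q and p="p2 q"] unfolding sp by blast+
      have pr: "profit f {\<theta>\<in>{0..1}. s2 (c1 q \<theta>) q (p2 q) \<theta>} (p2 q + S - S) = 0" using B(1) by simp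
      have lt: "\<theta>0 < p2 q + S" using gt p0e by linarith
      show False by (rule noM[OF lt sb pr])
    qed
  qed
  have p1pg: "p1 \<le> pg"
  proof (rule ccontr)
    assume "\<not> p1 \<le> pg"
    hence gt: "pg < p1" by simp
    have sp: "sale_pay I S p1 = p1 + S" using spf gt pg p0_I by simp
    have B: "profit f {\<theta>\<in>{0..1}. c1 p1 \<theta> = Mkt} p1 = 0" using E4 unfolding bertrand_def by blast
    have L: "{t\<in>{0..1}. t < p1 + S} \<subseteq> {\<theta>\<in>{0..1}. c1 p1 \<theta> = Mkt}"
    proof
      fix t assume t: "t \<in> {t\<in>{0..1}. t < p1 + S}"
      hence t1: "t \<in> {0..1}" by simp
      have "pay Mkt p1 t \<le> pay (c1 p1 t) p1 t" using OPT[OF t1] by blast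
      then have "c1 p1 t = Mkt" using t gt sp spg unfolding pay_def by (cases "c1 p1 t") auto
      thus "t \<in> {\<theta>\<in>{0..1}. c1 p1 \<theta> = Mkt}" using t1 by simp
    qed
    have R: "{\<theta>\<in>{0..1}. c1 p1 \<theta> = Mkt} \<subseteq> {t\<in>{0..1}. t \<le> p1 + S}"
    proof
      fix t assume t: "t \<in> {\<theta>\<in>{0..1}. c1 p1 \<theta> = Mkt}"
      hence t1: "t \<in> {0..1}" by simp
      have "pay Keep p1 t \<le> pay (c1 p1 t) p1 t" using OPT[OF t1] by blast
      thus "t \<in> {t\<in>{0..1}. t \<le> p1 + S}" using t sp unfolding pay_def by simp
    qed
    show False
    proof (rule noM[OF _ L R])
      show "\<theta>0 < p1 + S" using gt pg p0e by linarith
      show "profit f {\<theta>\<in>{0..1}. c1 p1 \<theta> = Mkt} (p1 + S - S) = 0" using B by simp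
    qed
  qed
  have part1: "\<forall>\<theta>\<in>{0..1}. \<theta> \<noteq> pg + S \<longrightarrow> (c1 p1 \<theta> = Gov \<longleftrightarrow> \<theta> < pg + S)"
  proof (intro ballI impI)
    fix \<theta> assume t: "\<theta> \<in> {0..(1::real)}" and ne: "\<theta> \<noteq> pg + S"
    have mk: "sale_pay I S p1 \<le> pg + S" using spl[of p1] p1pg by simp
    show "c1 p1 \<theta> = Gov \<longleftrightarrow> \<theta> < pg + S"
    proof
      assume "c1 p1 \<theta> = Gov"
      moreover have "pay Keep p1 \<theta> \<le> pay (c1 p1 \<theta>) p1 \<theta>" using OPT[OF t] by blast
      ultimately show "\<theta> < pg + S" using ne spg unfolding pay_def by simp
    next
      assume lt: "\<theta> < pg + S"
      have "pay (c1 p1 \<theta>) p1 \<theta> \<le> pay Gov p1 \<theta>"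
        using lt mk spg unfolding pay_def by (cases "c1 p1 \<theta>") auto
      thus "c1 p1 \<theta> = Gov" using OPT[OF t] by blast
    qed
  qed
  have part3: "\<forall>\<theta>\<in>{0..1}. \<theta> \<noteq> \<theta>0 \<longrightarrow> (s2 (c1 p1 \<theta>) p1 p0 \<theta> \<longleftrightarrow> \<theta> < \<theta>0)"
  proof (intro ballI impI)
    fix \<theta> assume t: "\<theta> \<in> {0..(1::real)}" and ne: "\<theta> \<noteq> \<theta>0"
    show "s2 (c1 p1 \<theta>) p1 p0 \<theta> \<longleftrightarrow> \<theta> < \<theta>0"
      using E1[OF t, of "c1 p1 \<theta>" p1 p0] sp0 ne by auto
  qed
  show ?thesis using part1 P2 part3 by blast
qed

end
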